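(* Let $\alpha$ be a (jointly continuous) action of a locally compact group $G$ on a locally compact Hausdorff space $M$, and so on $C_\infty(M)$ via $(\alpha_xf)(m)=f(\alpha_x^{-1}(m))$. If $\alpha$ on $C_\infty(M)$ is integrable, then every $\alpha$-orbit in $M$ is closed, and the stability subgroup of each point of $M$ is compact.
   Context: $G$ carries a fixed left Haar measure. Let $\mathcal B$ be the set of $\lambda\in L^\infty(G)$ with compact support and $0\le\lambda\le1$, directed pointwise; for $a\in A=C_\infty(M)$, $p_\lambda(a)=\int\lambda(x)\alpha_x(a)\,dx$. An element $a\in A^+$ is order-integrable if $\sup_{\lambda\in\mathcal B}\|p_\lambda(a)\|<\infty$ (equivalently the increasing net is bounded above in $A''$); $\mathcal M_\alpha$ is the linear span of order-integrable elements, and $\alpha$ is integrable if $\mathcal M_\alpha$ is dense in $A$. *)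

theory Defs
  imports "HOL-Analysis.Analysis"
begin

text \<open>The group G is a type 'g of class topological_group_add (a possibly
non-commutative group, written additively, with continuous operations),
Hausdorff and locally compact.\<close>

definition group_action :: "('g::group_add \<Rightarrow> 'm \<Rightarrow> 'm) \<Rightarrow> bool" where
  "group_action act \<longleftrightarrow> (\<forall>m. act 0 m = m) \<and> (\<forall>g h m. act (g + h) m = act g (act h m))"

definition jointly_continuous :: "('g::topological_space \<Rightarrow> 'm::topological_space \<Rightarrow> 'm) \<Rightarrow> bool" where
  "jointly_continuous act \<longleftrightarrow> continuous_on UNIV (\<lambda>p. act (fst p) (snd p))"

definition left_haar :: "('g::topological_group_add) measure \<Rightarrow> bool" where
  "left_haar \<mu> \<longleftrightarrow>
     sets \<mu> = sets borel \<and>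
     (\<forall>g A. A \<in> sets borel \<longrightarrow> emeasure \<mu> ((\<lambda>x. g + x) ` A) = emeasure \<mu> A) \<and>
     (\<forall>K. compact K \<longrightarrow> emeasure \<mu> K < \<infinity>) \<and>
     (\<forall>U. open U \<and> U \<noteq> {} \<longrightarrow> emeasure \<mu> U > 0) \<and>
     (\<forall>A. A \<in> sets borel \<longrightarrow> emeasure \<mu> A = (INF U\<in>{U. open U \<and> A \<subseteq> U}. emeasure \<mu> U)) \<and>
     (\<forall>U. open U \<longrightarrow> emeasure \<mu> U = (SUP K\<in>{K. compact K \<and> K \<subseteq> U}. emeasure \<mu> K))"

definition Cinf :: "('m::topological_space \<Rightarrow> complex) set" where
  "Cinf = {f. continuous_on UNIV f \<and>
              (\<forall>e>0. \<exists>K. compact K \<and> (\<forall>m. m \<notin> K \<longrightarrow> cmod (f m) < e))}"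

text \<open>The index set \<B>: (representatives of) L^\<infinity> functions with compact
support and values in [0,1].\<close>

definition cutoffs :: "('g::topological_space \<Rightarrow> real) set" where
  "cutoffs = {l. l \<in> borel_measurable borel \<and> (\<forall>x. 0 \<le> l x \<and> l x \<le> 1) \<and>
                 (\<exists>K. compact K \<and> (\<forall>x. x \<notin> K \<longrightarrow> l x = 0))}"

definition alpha_fun :: "('g::group_add \<Rightarrow> 'm \<Rightarrow> 'm) \<Rightarrow> 'g \<Rightarrow> ('m \<Rightarrow> complex) \<Rightarrow> 'm \<Rightarrow> complex" where
  "alpha_fun act x f = (\<lambda>m. f (act (- x) m))"

text \<open>p_\<lambda>(a) = \<integral> \<lambda>(x) \<alpha>_x(a) dx, evaluated pointwise (evaluation at a point is
a continuous linear functional on C_\<infinity>(M), so this is the C_\<infinity>(M)-valued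
integral evaluated at m).\<close>

definition p_lambda :: "'g::group_add measure \<Rightarrow> ('g \<Rightarrow> 'm \<Rightarrow> 'm) \<Rightarrow> ('g \<Rightarrow> real) \<Rightarrow> ('m \<Rightarrow> complex) \<Rightarrow> 'm \<Rightarrow> complex" where
  "p_lambda \<mu> act l a = (\<lambda>m. integral\<^sup>L \<mu> (\<lambda>x. complex_of_real (l x) * alpha_fun act x a m))"

definition order_integrable ::
  "('g::topological_group_add) measure \<Rightarrow> ('g \<Rightarrow> 'm::topological_space \<Rightarrow> 'm) \<Rightarrow> ('m \<Rightarrow> complex) \<Rightarrow> bool" where
  "order_integrable \<mu> act a \<longleftrightarrow>
     a \<in> Cinf \<and> (\<forall>m. Im (a m) = 0 \<and> Re (a m) \<ge> 0) \<and>
     (\<exists>C. \<forall>l\<in>cutoffs. \<forall>m. cmod (p_lambda \<mu> act l a m) \<le> C)"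

definition M_alpha ::
  "('g::topological_group_add) measure \<Rightarrow> ('g \<Rightarrow> 'm::topological_space \<Rightarrow> 'm) \<Rightarrow> ('m \<Rightarrow> complex) set" where
  "M_alpha \<mu> act = {f. \<exists>n (c::nat \<Rightarrow> complex) (a::nat \<Rightarrow> 'm \<Rightarrow> complex).
      (\<forall>i<n. order_integrable \<mu> act (a i)) \<and> f = (\<lambda>m. \<Sum>i<n. c i * a i m)}"

definition integrable_action ::
  "('g::topological_group_add) measure \<Rightarrow> ('g \<Rightarrow> 'm::topological_space \<Rightarrow> 'm) \<Rightarrow> bool" where
  "integrable_action \<mu> act \<longleftrightarrow>
     (\<forall>f\<in>Cinf. \<forall>e>0. \<exists>g\<in>M_alpha \<mu> act. \<forall>m. cmod (f m - g m) \<le> e)"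

end

theory Submission
  imports Defs
begin


lemma Hausdorff_t2: "Hausdorff_space (euclidean :: 'a::t2_space topology)"
  unfolding Hausdorff_space_def disjnt_def
  using hausdorff by auto

lemma lc_nbhd:
  fixes x :: "'a::t2_space"
  assumes "locally_compact_space (euclidean::'a topology)" "open A" "x \<in> A"
  shows "\<exists>V K. open V \<and> compact K \<and> x \<in> V \<and> V \<subseteq> K \<and> K \<subseteq> A"
proof -
  have H: "Hausdorff_space (euclidean::'a topology) \<or> regular_space (euclidean::'a topology)"
    using Hausdorff_t2 by (rule disjI1)
  have "neighbourhood_base_of (compactin euclidean) (euclidean::'a topology)"
    using locally_compact_space_neighbourhood_base[OF H] assms(1) by simp
  then have "\<forall>W (y::'a). open W \<and> y \<in> W \<longrightarrow> (\<exists>U V. open U \<and> compact V \<and> y \<in> U \<and> U \<subseteq> V \<and> V \<subseteq> W)"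
    unfolding neighbourhood_base_of compactin_euclidean_iff by simp
  then show ?thesis using assms(2,3) by blast
qed


lemma bump:
  fixes n :: "'m::t2_space"
  assumes "locally_compact_space (euclidean::'m topology)"
  shows "\<exists>f\<in>Cinf. f n = 1"
proof -
  note L = lc_nbhd[OF assms open_UNIV UNIV_I, of n]
  thm L
  obtain V K where VK: "open V" "compact K" "n \<in> V" "V \<subseteq> K"
    using L by blast
  have cr: "completely_regular_space (euclidean::'m topology)"
    by (rule locally_compact_regular_imp_completely_regular_space[OF assms]) (rule disjI1, rule Hausdorff_t2)
  have op: "openin euclidean V" using open_openin[THEN iffD1, OF VK(1)] .
  note C = cr[unfolded completely_regular_space_alt', rule_format, OF op VK(3)]
  obtain f where f: "continuous_map euclidean euclideanreal f" "f n = 0" "f ` (topspace euclidean - V) \<subseteq> {1}"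
    using C by blast
  define h where "h = (\<lambda>x. complex_of_real (1 - f x))"
  have "continuous_on UNIV f" using f(1) by (simp add: continuous_map_iff_continuous2)
  then have hc: "continuous_on UNIV h" unfolding h_def by (intro continuous_intros)
  have h0: "h x = 0" if "x \<notin> K" for x
  proof -
    have "x \<notin> V" using that VK(4) by blast
    then have "f x = 1" using f(3) by auto
    then show ?thesis unfolding h_def by simp
  qed
  have "\<forall>e>0. \<exists>K. compact K \<and> (\<forall>m. m \<notin> K \<longrightarrow> cmod (h m) < e)"
    using VK(2) h0 by (intro allI impI exI[of _ K]) simp
  then have "h \<in> Cinf" unfolding Cinf_def using hc by blast
  moreover have "h n = 1" using f(2) unfolding h_def by simp
  ultimately show ?thesis by blast
qed

lemma exists_pos:
  fixes \<mu> :: "'g::{topological_group_add,t2_space} measure" and act :: "'g \<Rightarrow> 'm::t2_space \<Rightarrow> 'm"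
  assumes lcM: "locally_compact_space (euclidean::'m topology)"
    and ia: "integrable_action \<mu> act"
  shows "\<exists>b \<delta> U C. b \<in> Cinf \<and> (\<forall>y. Im (b y) = 0) \<and> \<delta> > 0 \<and> open U \<and> n \<in> U \<and>
           (\<forall>y\<in>U. \<delta> \<le> Re (b y)) \<and> (\<forall>l\<in>cutoffs. \<forall>m. cmod (p_lambda \<mu> act l b m) \<le> C)"
proof -
  obtain f where f: "f \<in> Cinf" "f n = 1" using bump[OF lcM] by blast
  have A: "\<forall>e>0. \<exists>g\<in>M_alpha \<mu> act. \<forall>m. cmod (f m - g m) \<le> e"
    using ia f(1) unfolding integrable_action_def by blast
  have h: "(1/2::real) > 0" by simp
  obtain g where g: "g \<in> M_alpha \<mu> act" "\<forall>m. cmod (f m - g m) \<le> 1/2"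
    using A[rule_format, OF h] by blast
  from g(1) obtain N :: nat and c :: "nat \<Rightarrow> complex" and a :: "nat \<Rightarrow> 'm \<Rightarrow> complex" where oi: "\<forall>i<N. order_integrable \<mu> act (a i)"
    and geq: "g = (\<lambda>m. \<Sum>i<N. c i * a i m)"
    unfolding M_alpha_def mem_Collect_eq by blast
  have "g n \<noteq> 0"
  proof
    assume "g n = 0"
    then have "cmod (f n - g n) = 1" using f(2) by simp
    then show False using g(2)[rule_format, of n] by simp
  qed
  then obtain i where i: "i < N" "a i n \<noteq> 0"
    unfolding geq by (metis (mono_tags, lifting) lessThan_iff mult_zero_right sum.neutral)
  define b where "b = a i"
  have ob: "order_integrable \<mu> act b" using oi i(1) unfolding b_def by blast
  then have bC: "b \<in> Cinf" and bR: "\<forall>y. Im (b y) = 0 \<and> Re (b y) \<ge> 0"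
    and bB: "\<exists>C. \<forall>l\<in>cutoffs. \<forall>m. cmod (p_lambda \<mu> act l b m) \<le> C"
    unfolding order_integrable_def by blast+
  then obtain C where C: "\<forall>l\<in>cutoffs. \<forall>m. cmod (p_lambda \<mu> act l b m) \<le> C" by blast
  have "Re (b n) \<noteq> 0" using i(2) bR unfolding b_def by (simp add: complex_eq_iff)
  then have pos: "Re (b n) > 0" using bR[rule_format, of n] by linarith
  define \<delta> where "\<delta> = Re (b n) / 2"
  have dpos: "\<delta> > 0" using pos unfolding \<delta>_def by simp
  have bc: "continuous_on UNIV b" using bC unfolding Cinf_def by blast
  define U where "U = {y. \<delta> < Re (b y)}"
  have "open U" unfolding U_def
    by (rule open_Collect_less) (intro continuous_intros continuous_on_Re[OF bc])+
  moreover have "n \<in> U" unfolding U_def \<delta>_def using pos by simp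
  moreover have "\<forall>y\<in>U. \<delta> \<le> Re (b y)" unfolding U_def by simp
  moreover have "\<forall>y. Im (b y) = 0" using bR by blast
  ultimately show ?thesis using bC dpos C by blast
qed



lemma grp1:
  fixes x :: "'a::group_add"
  assumes "x = -g + -w1" "x = -h + -w2"
  shows "h = (-w2 + w1) + g"
proof -
  have "h + x = -w2" by (simp only: assms(2) add_minus_cancel)
  then have "h + (-g + -w1) = -w2" using assms(1) by simp
  then have "h + (-g + -w1) + w1 = -w2 + w1" by simp
  then have "h + -g = -w2 + w1" by (simp add: add.assoc)
  then have "h + -g + g = -w2 + w1 + g" by simp
  then show ?thesis by (simp add: add.assoc)
qed

lemma grp2: "- (-g + -w) = w + (g::'a::group_add)"
  by (simp add: minus_add)

lemma greedy:
  fixes T E :: "'a::group_add set"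
  assumes st: "\<And>F. finite F \<Longrightarrow> F \<subseteq> T \<Longrightarrow> (\<exists>h\<in>T. \<forall>g\<in>F. \<forall>e\<in>E. h \<noteq> e + g)"
    and E0: "0 \<in> E" and Eneg: "\<And>e. e \<in> E \<Longrightarrow> -e \<in> E"
  shows "\<exists>F. finite F \<and> card F = N \<and> F \<subseteq> T \<and> (\<forall>g\<in>F. \<forall>h\<in>F. \<forall>e\<in>E. h = e + g \<longrightarrow> h = g)"
proof (induction N)
  case 0
  show ?case by (intro exI[of _ "{}"]) simp
next
  case (Suc N)
  then obtain F where F: "finite F" "card F = N" "F \<subseteq> T"
    and P: "\<forall>g\<in>F. \<forall>h\<in>F. \<forall>e\<in>E. h = e + g \<longrightarrow> h = g" by blast
  obtain h where h: "h \<in> T" "\<forall>g\<in>F. \<forall>e\<in>E. h \<noteq> e + g" using st[OF F(1,3)] by blast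
  have hF: "h \<notin> F" using h(2) E0 by force
  have "\<forall>g\<in>insert h F. \<forall>h'\<in>insert h F. \<forall>e\<in>E. h' = e + g \<longrightarrow> h' = g"
  proof (intro ballI impI)
    fix g h' e assume g: "g \<in> insert h F" and h': "h' \<in> insert h F" and e: "e \<in> E" and eq: "h' = e + g"
    show "h' = g"
    proof (cases "g = h")
      case True
      show ?thesis
      proof (cases "h' = h")
        case False
        then have "h' \<in> F" using h' by blast
        have "h = -e + h'" using eq True by (simp add: add.assoc[symmetric])
        then show ?thesis using h(2) \<open>h' \<in> F\<close> Eneg[OF e] by blast
      qed (use True in simp)
    next
      case False
      then have gF: "g \<in> F" using g by blast
      show ?thesis
      proof (cases "h' = h")
        case True
        then show ?thesis using h(2) gF e eq by blast
      next
        case False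
        then show ?thesis using P gF h' e eq by blast
      qed
    qed
  qed
  then show ?case using F hF h(1) by (intro exI[of _ "insert h F"]) simp
qed



lemma measure_part:
  fixes \<mu> :: "'g::{topological_group_add,t2_space} measure" and act :: "'g \<Rightarrow> 'm::t2_space \<Rightarrow> 'm"
  assumes haar: "left_haar \<mu>" and jc: "jointly_continuous act"
    and aC: "a \<in> Cinf" and aR: "\<forall>y. Im (a y) = 0"
    and aU: "\<forall>y\<in>U. Re (a y) \<ge> \<delta>"
    and W: "compact W"
    and F: "finite F"
    and disj: "disjoint_family_on (\<lambda>g. (\<lambda>x. -g + x) ` W) F"
    and inc: "\<forall>g\<in>F. \<forall>x\<in>(\<lambda>x. -g + x) ` W. act (-x) m \<in> U"
    and L: "L = (\<Union>g\<in>F. (\<lambda>x. -g + x) ` W)"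
  shows "indicator L \<in> cutoffs"
    and "\<delta> * real (card F) * measure \<mu> W \<le> cmod (p_lambda \<mu> act (indicator L) a m)"
proof -
  note H = haar[unfolded left_haar_def]
  have sb: "sets \<mu> = sets borel" using conjunct1[OF H] .
  have tr: "\<And>g A. A \<in> sets borel \<Longrightarrow> emeasure \<mu> ((\<lambda>x. g + x) ` A) = emeasure \<mu> A"
    using conjunct1[OF conjunct2[OF H]] by blast
  have fin: "\<And>K. compact K \<Longrightarrow> emeasure \<mu> K < \<infinity>"
    using conjunct1[OF conjunct2[OF conjunct2[OF H]]] by blast
  have cX: "compact ((\<lambda>x. -g + x) ` W)" for g
    by (rule compact_continuous_image[OF _ W]) (intro continuous_intros)
  have cL: "compact L" unfolding L using F cX by blast
  have Lb: "L \<in> sets borel" using cL by (simp add: borel_closed compact_imp_closed)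
  have Wb: "W \<in> sets borel" using W by (simp add: borel_closed compact_imp_closed)
  show "indicator L \<in> cutoffs"
    unfolding cutoffs_def using Lb cL by (auto simp: indicator_def)
  have "emeasure \<mu> L = (\<Sum>g\<in>F. emeasure \<mu> ((\<lambda>x. -g + x) ` W))"
    unfolding L
    by (rule sum_emeasure[symmetric]) (use F disj sb cX in \<open>auto simp: borel_closed compact_imp_closed\<close>)
  also have "\<dots> = (\<Sum>g\<in>F. emeasure \<mu> W)" using tr[OF Wb] by simp
  also have "\<dots> = of_nat (card F) * emeasure \<mu> W" by simp
  finally have eL: "emeasure \<mu> L = of_nat (card F) * emeasure \<mu> W" .
  have mL: "measure \<mu> L = real (card F) * measure \<mu> W"
    unfolding measure_def eL enn2real_mult by simp
  define \<rho> where "\<rho> = (\<lambda>x. Re (a (act (-x) m)))"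
  have ac: "continuous_on UNIV a" using aC unfolding Cinf_def by blast
  have jc': "continuous_on UNIV (\<lambda>p. act (fst p) (snd p))" using jc unfolding jointly_continuous_def .
  have c1: "continuous_on UNIV (\<lambda>x. act (-x) m)"
  proof -
    have "continuous_on UNIV (\<lambda>x::'g. (-x, m))" by (intro continuous_intros)
    then show ?thesis using continuous_on_compose2[OF jc', of UNIV "\<lambda>x. (-x, m)"] by simp
  qed
  have c2: "continuous_on UNIV (\<lambda>x. a (act (-x) m))"
    using continuous_on_compose2[OF ac c1] by simp
  have rc: "continuous_on UNIV \<rho>" unfolding \<rho>_def using c2 by (intro continuous_intros)
  have "bounded (\<rho> ` L)"
    by (rule compact_imp_bounded, rule compact_continuous_image[OF _ cL]) (use rc continuous_on_subset in blast)
  then obtain B where B: "\<And>x. x \<in> L \<Longrightarrow> norm (\<rho> x) \<le> B" unfolding bounded_iff by blast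
  define \<psi> where "\<psi> = (\<lambda>x. indicator L x * \<rho> x)"
  have Lm: "L \<in> sets \<mu>" using Lb sb by simp
  have Lf: "emeasure \<mu> L < \<infinity>" using fin[OF cL] .
  have ib: "integrable \<mu> (\<lambda>x. B * indicator L x)"
    using integrable_real_indicator[OF Lm Lf] by simp
  have "\<psi> \<in> borel_measurable borel"
    unfolding \<psi>_def using Lb rc by (intro borel_measurable_times borel_measurable_indicator borel_measurable_continuous_onI)
  then have pm: "\<psi> \<in> borel_measurable \<mu>" using measurable_cong_sets[OF sb, of "borel::real measure" borel] by simp
  have ipsi: "integrable \<mu> \<psi>"
  proof (rule Bochner_Integration.integrable_bound[OF ib pm], rule AE_I2)
    fix x show "norm (\<psi> x) \<le> norm (B * indicator L x)"
      using B[of x] unfolding \<psi>_def by (cases "x \<in> L") auto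
  qed
  have "\<delta> * measure \<mu> L = integral\<^sup>L \<mu> (\<lambda>x. \<delta> * indicator L x)"
    using Lm by simp
  also have "\<dots> \<le> integral\<^sup>L \<mu> \<psi>"
  proof (rule integral_mono)
    show "integrable \<mu> (\<lambda>x. \<delta> * indicator L x)"
      using integrable_real_indicator[OF Lm Lf] by simp
    show "integrable \<mu> \<psi>" by (rule ipsi)
    fix x show "\<delta> * indicator L x \<le> \<psi> x"
    proof (cases "x \<in> L")
      case True
      then obtain g where "g \<in> F" "x \<in> (\<lambda>x. -g + x) ` W" unfolding L by blast
      then have "act (-x) m \<in> U" using inc by blast
      then have "\<delta> \<le> \<rho> x" unfolding \<rho>_def using aU by blast
      then show ?thesis using True unfolding \<psi>_def by simp
    qed (simp add: \<psi>_def)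
  qed
  finally have le1: "\<delta> * measure \<mu> L \<le> integral\<^sup>L \<mu> \<psi>" .
  have "p_lambda \<mu> act (indicator L) a m = integral\<^sup>L \<mu> (\<lambda>x. complex_of_real (\<psi> x))"
    unfolding p_lambda_def alpha_fun_def \<psi>_def \<rho>_def
  proof (rule Bochner_Integration.integral_cong[OF refl])
    fix x
    have "a (act (- x) m) = complex_of_real (Re (a (act (- x) m)))"
      using aR by (simp add: complex_eq_iff)
    then show "complex_of_real (indicator L x) * a (act (- x) m) =
         complex_of_real (indicator L x * Re (a (act (- x) m)))" by simp
  qed
  also have "\<dots> = complex_of_real (integral\<^sup>L \<mu> \<psi>)" by (rule integral_complex_of_real)
  finally have "cmod (p_lambda \<mu> act (indicator L) a m) = \<bar>integral\<^sup>L \<mu> \<psi>\<bar>" by simp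
  then show "\<delta> * real (card F) * measure \<mu> W \<le> cmod (p_lambda \<mu> act (indicator L) a m)"
    using le1 mL by (simp add: mult.assoc)
qed



lemma key:
  fixes \<mu> :: "'g::{topological_group_add,t2_space} measure" and act :: "'g \<Rightarrow> 'm::t2_space \<Rightarrow> 'm"
  assumes lcG: "locally_compact_space (euclidean::'g topology)"
    and lcM: "locally_compact_space (euclidean::'m topology)"
    and haar: "left_haar \<mu>" and ga: "group_action act" and jc: "jointly_continuous act"
    and ia: "integrable_action \<mu> act"
  shows "\<exists>B. open B \<and> n \<in> B \<and> (\<forall>m. \<exists>K. compact K \<and> {g. act g m \<in> B} \<subseteq> K)"
proof -
  obtain b \<delta> U C where b: "b \<in> Cinf" "\<forall>y. Im (b y) = 0" "\<delta> > 0" "open U" "n \<in> U"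
      "\<forall>y\<in>U. \<delta> \<le> Re (b y)" "\<forall>l\<in>cutoffs. \<forall>m. cmod (p_lambda \<mu> act l b m) \<le> C"
    using exists_pos[OF lcM ia, of n] by blast
  note H = haar[unfolded left_haar_def]
  have sb: "sets \<mu> = sets borel" using conjunct1[OF H] .
  have fin: "\<And>K. compact K \<Longrightarrow> emeasure \<mu> K < \<infinity>"
    using conjunct1[OF conjunct2[OF conjunct2[OF H]]] by blast
  have posO: "\<And>V. open V \<Longrightarrow> V \<noteq> {} \<Longrightarrow> emeasure \<mu> V > 0"
    using conjunct1[OF conjunct2[OF conjunct2[OF conjunct2[OF H]]]] by blast
  have jc': "continuous_on UNIV (\<lambda>p. act (fst p) (snd p))" using jc unfolding jointly_continuous_def .
  define P where "P = (\<lambda>p. act (fst p) (snd p)) -` U"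
  have "open ((\<lambda>p. act (fst p) (snd p)) -` U \<inter> UNIV)"
    using continuous_on_open_vimage[OF open_UNIV, of "\<lambda>p. act (fst p) (snd p)"] jc' b(4) by blast
  then have oP: "open P" unfolding P_def by simp
  have a0: "act 0 n = n" using ga unfolding group_action_def by blast
  have "(0, n) \<in> P" unfolding P_def using a0 b(5) by simp
  then obtain A B where AB: "open A" "open B" "(0, n) \<in> A \<times> B" "A \<times> B \<subseteq> P"
    using open_prod_elim[OF oP] by blast
  have "0 \<in> A" using AB(3) by blast
  note LW = lc_nbhd[OF lcG AB(1) this]
  obtain V0 W where VW: "open V0" "compact W" "0 \<in> V0" "V0 \<subseteq> W" "W \<subseteq> A"
    using LW by blast
  have act_in: "\<And>w y. w \<in> W \<Longrightarrow> y \<in> B \<Longrightarrow> act w y \<in> U"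
  proof -
    fix w y assume "w \<in> W" "y \<in> B"
    then have "(w, y) \<in> P" using AB(4) VW(5) by blast
    then show "act w y \<in> U" unfolding P_def by simp
  qed
  define W' where "W' = uminus ` W"
  have cW': "compact W'" unfolding W'_def
    by (rule compact_continuous_image[OF _ VW(2)]) (intro continuous_intros)
  have W'm: "W' \<in> sets \<mu>" using cW' sb by (simp add: borel_closed compact_imp_closed)
  have eqV: "uminus ` V0 = (uminus::'g\<Rightarrow>'g) -` V0 \<inter> UNIV"
    by (auto intro: image_eqI[where x="- _"])
  have cu: "continuous_on UNIV (uminus::'g\<Rightarrow>'g)" by (intro continuous_intros)
  have "open (uminus ` V0)" unfolding eqV
    using continuous_on_open_vimage[OF open_UNIV, of "uminus::'g\<Rightarrow>'g"] cu VW(1) by blast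
  moreover have "(0::'g) \<in> uminus ` V0" using VW(3) by (metis image_eqI minus_zero)
  ultimately have "emeasure \<mu> (uminus ` V0) > 0" using posO by blast
  also have "emeasure \<mu> (uminus ` V0) \<le> emeasure \<mu> W'"
    by (rule emeasure_mono[OF _ W'm]) (use VW(4) in \<open>auto simp: W'_def\<close>)
  finally have "emeasure \<mu> W' > 0" .
  then have mpos: "measure \<mu> W' > 0"
    unfolding measure_def enn2real_positive_iff using fin[OF cW'] by simp
  define E where "E = (\<lambda>p. -snd p + fst p) ` (W \<times> W)"
  have cE: "compact E" unfolding E_def
    by (rule compact_continuous_image[OF _ compact_Times[OF VW(2) VW(2)]]) (intro continuous_intros)
  have "0 \<in> W" using VW(3,4) by blast
  then have "(\<lambda>p. -snd p + fst p) (0::'g, 0::'g) \<in> E" unfolding E_def by (intro imageI) simp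
  then have E0: "(0::'g) \<in> E" by simp
  have Eneg: "\<And>e. e \<in> E \<Longrightarrow> -e \<in> E"
  proof -
    fix e assume "e \<in> E"
    then obtain w1 w2 where w: "w1 \<in> W" "w2 \<in> W" "e = -w2 + w1" unfolding E_def by auto
    then have "-e = -w1 + w2" by (simp add: minus_add)
    then show "-e \<in> E" unfolding E_def using w by (intro image_eqI[where x="(w2,w1)"]) simp_all
  qed
  show ?thesis
  proof (intro exI[of _ B] conjI allI)
    show "open B" by (rule AB(2))
    show "n \<in> B" using AB(3) by blast
    fix m
    define T where "T = {g. act g m \<in> B}"
    show "\<exists>K. compact K \<and> {g. act g m \<in> B} \<subseteq> K"
    proof (rule ccontr)
      assume nK: "\<not> (\<exists>K. compact K \<and> {g. act g m \<in> B} \<subseteq> K)"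
      have st: "\<exists>h\<in>T. \<forall>g\<in>F. \<forall>e\<in>E. h \<noteq> e + g" if F: "finite F" "F \<subseteq> T" for F
      proof -
        define K where "K = (\<lambda>p. fst p + snd p) ` (E \<times> F)"
        have "compact K" unfolding K_def
          by (rule compact_continuous_image[OF _ compact_Times[OF cE finite_imp_compact[OF F(1)]]]) (intro continuous_intros)
        then have "\<not> T \<subseteq> K" using nK unfolding T_def by blast
        then obtain h where h: "h \<in> T" "h \<notin> K" by blast
        have "h \<noteq> e + g" if "g \<in> F" "e \<in> E" for g e
        proof
          assume "h = e + g"
          then have "h \<in> K" unfolding K_def using that by (intro image_eqI[where x="(e,g)"]) simp_all
          then show False using h(2) by blast
        qed
        then show ?thesis using h(1) by blast
      qed
      define N where "N = nat \<lceil>C / (\<delta> * measure \<mu> W')\<rceil> + 1"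
      obtain F where F: "finite F" "card F = N" "F \<subseteq> T"
        "\<forall>g\<in>F. \<forall>h\<in>F. \<forall>e\<in>E. h = e + g \<longrightarrow> h = g"
        using greedy[of T E, OF st E0 Eneg] by blast
      define L where "L = (\<Union>g\<in>F. (\<lambda>x. -g + x) ` W')"
      have disj: "disjoint_family_on (\<lambda>g. (\<lambda>x. -g + x) ` W') F"
        unfolding disjoint_family_on_def
      proof (intro ballI impI)
        fix g h assume g: "g \<in> F" and h: "h \<in> F" and gh: "g \<noteq> h"
        show "(\<lambda>x. -g + x) ` W' \<inter> (\<lambda>x. -h + x) ` W' = {}"
        proof (rule ccontr)
          assume "(\<lambda>x. -g + x) ` W' \<inter> (\<lambda>x. -h + x) ` W' \<noteq> {}"
          then obtain x w1 w2 where w: "w1 \<in> W" "w2 \<in> W" "x = -g + -w1" "x = -h + -w2"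
            unfolding W'_def by blast
          have "h = (-w2 + w1) + g" by (rule grp1[OF w(3,4)])
          moreover have "-w2 + w1 \<in> E" unfolding E_def using w(1,2) by (intro image_eqI[where x="(w1,w2)"]) simp_all
          ultimately have "h = g" using F(4) g h by blast
          then show False using gh by simp
        qed
      qed
      have inc: "\<forall>g\<in>F. \<forall>x\<in>(\<lambda>x. -g + x) ` W'. act (-x) m \<in> U"
      proof (intro ballI)
        fix g x assume g: "g \<in> F" and x: "x \<in> (\<lambda>x. -g + x) ` W'"
        then obtain w where w: "w \<in> W" "x = -g + -w" unfolding W'_def by blast
        have "act (-x) m = act (w + g) m" using w(2) grp2 by simp
        also have "\<dots> = act w (act g m)" using ga unfolding group_action_def by blast
        finally show "act (-x) m \<in> U" using act_in[OF w(1)] g F(3) unfolding T_def by auto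
      qed
      note MP = measure_part[OF haar jc b(1) b(2) b(6) cW' F(1) disj inc L_def]
      have "\<delta> * real (card F) * measure \<mu> W' \<le> C"
        using MP b(7) by (meson order_trans)
      then have le: "real N * (\<delta> * measure \<mu> W') \<le> C" using F(2) by (simp add: algebra_simps)
      have q: "\<delta> * measure \<mu> W' > 0" using b(3) mpos by simp
      have "C / (\<delta> * measure \<mu> W') < real N"
        unfolding N_def using real_nat_ceiling_ge[of "C / (\<delta> * measure \<mu> W')"] by simp
      then have "C < real N * (\<delta> * measure \<mu> W')" using q by (simp add: pos_divide_less_eq)
      then show False using le by simp
    qed
  qed
qed


theorem proposition1p17:
  fixes \<mu> :: "('g::{topological_group_add, t2_space}) measure"
    and act :: "'g \<Rightarrow> 'm::t2_space \<Rightarrow> 'm"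
  assumes "locally_compact_space (euclidean :: 'g topology)"
    and "locally_compact_space (euclidean :: 'm topology)"
    and "left_haar \<mu>"
    and "group_action act"
    and "jointly_continuous act"
    and "integrable_action \<mu> act"
  shows "\<forall>m. closed (range (\<lambda>g. act g m)) \<and> compact {g. act g m = m}"
proof (intro allI conjI)
  note K = key[OF assms]
  fix m :: 'm
  have jc': "continuous_on UNIV (\<lambda>p. act (fst p) (snd p))" using assms(5) unfolding jointly_continuous_def .
  have "continuous_on UNIV (\<lambda>g::'g. (g, m))" by (intro continuous_intros)
  then have cm: "continuous_on UNIV (\<lambda>g. act g m)"
    using continuous_on_compose2[OF jc', of UNIV "\<lambda>g. (g, m)"] by simp
  show "compact {g. act g m = m}"
  proof -
    obtain B where B: "open B" "m \<in> B" "\<forall>m'. \<exists>K. compact K \<and> {g. act g m' \<in> B} \<subseteq> K"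
      using K[of m] by blast
    obtain Kc where Kc: "compact Kc" "{g. act g m \<in> B} \<subseteq> Kc" using B(3) by blast
    have cl: "closed {g. act g m = m}" by (rule closed_Collect_eq[OF cm continuous_on_const])
    have sub: "{g. act g m = m} \<subseteq> Kc" using Kc(2) B(2) by auto
    have "compact (Kc \<inter> {g. act g m = m})" by (rule compact_Int_closed[OF Kc(1) cl])
    moreover have "Kc \<inter> {g. act g m = m} = {g. act g m = m}" using sub by blast
    ultimately show ?thesis by simp
  qed
  show "closed (range (\<lambda>g. act g m))"
  proof -
    have "closure (range (\<lambda>g. act g m)) \<subseteq> range (\<lambda>g. act g m)"
    proof
      fix n assume n: "n \<in> closure (range (\<lambda>g. act g m))"
      obtain B where B: "open B" "n \<in> B" "\<forall>m'. \<exists>K. compact K \<and> {g. act g m' \<in> B} \<subseteq> K"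
        using K[of n] by blast
      obtain Kc where Kc: "compact Kc" "{g. act g m \<in> B} \<subseteq> Kc" using B(3) by blast
      define Q where "Q = (\<lambda>g. act g m) ` Kc"
      have cQ: "compact Q" unfolding Q_def
        by (rule compact_continuous_image[OF continuous_on_subset[OF cm] Kc(1)]) simp
      have clQ: "closed Q" using cQ by (rule compact_imp_closed)
      have sQ: "B \<inter> range (\<lambda>g. act g m) \<subseteq> Q" unfolding Q_def using Kc(2) by blast
      have "n \<in> B \<inter> closure (range (\<lambda>g. act g m))" using n B(2) by blast
      also have "\<dots> \<subseteq> closure (B \<inter> range (\<lambda>g. act g m))" by (rule open_Int_closure_subset[OF B(1)])
      also have "\<dots> \<subseteq> closure Q" by (rule closure_mono[OF sQ])
      also have "\<dots> = Q" using clQ by (rule closure_closed)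
      finally show "n \<in> range (\<lambda>g. act g m)" unfolding Q_def by blast
    qed
    then show ?thesis using closure_subset_eq by blast
  qed
qed

end
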